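(* Let $n\ge 2$ and let $\Psi^{(1)},\dots,\Psi^{(t)}$ be $t$ mutually orthogonal quantum Latin squares of order $n$. Then $t\le n-1$. Moreover, if $t=n-1$, then this set of MOQLS is classical.
   Context: A quantum Latin square (QLS) of order $n$ is an $n\times n$ matrix $\Psi=(\psi_{ij})_{1\le i,j\le n}$ whose entries are unit vectors in $\mathbb C^n$ such that the entries of each row and the entries of each column form an orthonormal basis of $\mathbb C^n$. Two QLS $\Psi=(\psi_{ij})$ and $\Phi=(\phi_{ij})$ of order $n$ are orthogonal if $\{\psi_{ij}\otimes\phi_{ij}: 1\le i,j\le n\}$ is an orthonormal basis of $\mathbb C^n\otimes\mathbb C^n$. A set of $t$ mutually orthogonal quantum Latin squares of order $n$ ($t$ MOQLS$(n)$) is a set of $t$ QLS of order $n$ that are pairwise orthogonal. Fix the standard orthonormal basis $\ket{1},\dots,\ket{n}$ of $\mathbb C^n$. Two sets of $t$ MOQLS$(n)$ are isotopic if one can be obtained from the other by a sequence of the operations: (i) multiplying individual entries by phase factors (complex numbers of modulus $1$); (ii) permuting the rows, and permuting the columns, simultaneously in all $t$ squares; (iii) for each square separately, applying one unitary transformation of $\mathbb C^n$ to all entries of that square. A set of $t$ MOQLS$(n)$ is classical if it is isotopic to a set of $t$ MOQLS$(n)$ all of whose entries lie in $\{\ket{1},\dots,\ket{n}\}$. *)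

theory Defs
  imports "HOL-Analysis.Analysis"
begin

text \<open>Vectors of C^n are modelled as complex^'n, where the finite type 'n has
  CARD('n) = n elements; rows and columns of an n x n square are indexed by 'n.
  The standard basis vector |k> is axis k 1.\<close>

definition cinner :: "complex^'n \<Rightarrow> complex^'n \<Rightarrow> complex" where
  "cinner x y = (\<Sum>k\<in>UNIV. cnj (x $ k) * y $ k)"

definition orthonormal_basis :: "'i set \<Rightarrow> ('i \<Rightarrow> complex^'n) \<Rightarrow> bool" where
  "orthonormal_basis I v \<longleftrightarrow>
     finite I \<and>
     (\<forall>i\<in>I. \<forall>j\<in>I. cinner (v i) (v j) = (if i = j then 1 else 0)) \<and>
     (\<forall>x::complex^'n. \<exists>c::'i \<Rightarrow> complex. x = (\<chi> k. \<Sum>i\<in>I. c i * v i $ k))"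

definition tensor :: "complex^'n \<Rightarrow> complex^'n \<Rightarrow> complex^('n \<times> 'n)" where
  "tensor x y = (\<chi> p. x $ fst p * y $ snd p)"

definition QLS :: "('n::finite \<Rightarrow> 'n \<Rightarrow> complex^'n) \<Rightarrow> bool" where
  "QLS P \<longleftrightarrow> (\<forall>i. orthonormal_basis UNIV (\<lambda>j. P i j)) \<and>
             (\<forall>j. orthonormal_basis UNIV (\<lambda>i. P i j))"

definition orthogonal_QLS :: "('n::finite \<Rightarrow> 'n \<Rightarrow> complex^'n) \<Rightarrow> ('n \<Rightarrow> 'n \<Rightarrow> complex^'n) \<Rightarrow> bool" where
  "orthogonal_QLS P Q \<longleftrightarrow> orthonormal_basis UNIV (\<lambda>(i,j). tensor (P i j) (Q i j))"

definition MOQLS :: "nat \<Rightarrow> (nat \<Rightarrow> 'n::finite \<Rightarrow> 'n \<Rightarrow> complex^'n) \<Rightarrow> bool" where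
  "MOQLS t M \<longleftrightarrow> (\<forall>k<t. QLS (M k)) \<and>
     (\<forall>k<t. \<forall>l<t. k \<noteq> l \<longrightarrow> orthogonal_QLS (M k) (M l))"

definition cadj :: "complex^'n^'n \<Rightarrow> complex^'n^'n" where
  "cadj U = (\<chi> i j. cnj (U $ j $ i))"

definition cunitary :: "complex^'n^'n \<Rightarrow> bool" where
  "cunitary U \<longleftrightarrow> U ** cadj U = mat 1 \<and> cadj U ** U = mat 1"

definition iso_step :: "nat \<Rightarrow> (nat \<Rightarrow> 'n::finite \<Rightarrow> 'n \<Rightarrow> complex^'n)
                        \<Rightarrow> (nat \<Rightarrow> 'n \<Rightarrow> 'n \<Rightarrow> complex^'n) \<Rightarrow> bool" where
  "iso_step t M M' \<longleftrightarrow>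
     (\<exists>c :: nat \<Rightarrow> 'n \<Rightarrow> 'n \<Rightarrow> complex. (\<forall>k<t. \<forall>i j. norm (c k i j) = 1) \<and>
         (\<forall>k<t. \<forall>i j. M' k i j = c k i j *s M k i j)) \<or>
     (\<exists>\<sigma> \<tau> :: 'n \<Rightarrow> 'n. bij \<sigma> \<and> bij \<tau> \<and>
         (\<forall>k<t. \<forall>i j. M' k i j = M k (\<sigma> i) (\<tau> j))) \<or>
     (\<exists>U :: nat \<Rightarrow> complex^'n^'n. (\<forall>k<t. cunitary (U k)) \<and>
         (\<forall>k<t. \<forall>i j. M' k i j = U k *v M k i j))"

definition isotopic :: "nat \<Rightarrow> (nat \<Rightarrow> 'n::finite \<Rightarrow> 'n \<Rightarrow> complex^'n)
                        \<Rightarrow> (nat \<Rightarrow> 'n \<Rightarrow> 'n \<Rightarrow> complex^'n) \<Rightarrow> bool" where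
  "isotopic t = (iso_step t)\<^sup>*\<^sup>*"

definition classical_MOQLS :: "nat \<Rightarrow> (nat \<Rightarrow> 'n::finite \<Rightarrow> 'n \<Rightarrow> complex^'n) \<Rightarrow> bool" where
  "classical_MOQLS t M \<longleftrightarrow>
     (\<exists>N. MOQLS t N \<and> isotopic t M N \<and>
          (\<forall>k<t. \<forall>i j. \<exists>a. N k i j = axis a 1))"

end

theory Submission imports Defs begin

lemma cinner_commute: "cinner y x = cnj (cinner x y)"
  unfolding cinner_def by (simp add: mult.commute)

lemma cinner_sum_right:
  "cinner x (\<chi> k. \<Sum>i\<in>I. c i * v i $ k) = (\<Sum>i\<in>I. c i * cinner x (v i))"
  unfolding cinner_def by (simp add: sum_distrib_left sum.swap[of _ UNIV] algebra_simps)

lemma cinner_scale: "cinner (a *s x) (b *s y) = cnj a * b * cinner x y"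
  unfolding cinner_def by (simp add: sum_distrib_left algebra_simps)

lemma cinner_tensor: "cinner (tensor a b) (tensor c d) = cinner a c * cinner b d"
  unfolding cinner_def tensor_def
  by (simp add: sum_product UNIV_Times_UNIV[symmetric] sum.cartesian_product algebra_simps case_prod_beta del: UNIV_Times_UNIV)

lemma cinner_self_cmod: "cinner x y * cinner y x = of_real ((cmod (cinner x y))^2)"
  by (metis cinner_commute complex_norm_square mult.commute)

lemma ob_orth: "orthonormal_basis I v \<Longrightarrow> i \<in> I \<Longrightarrow> j \<in> I \<Longrightarrow> cinner (v i) (v j) = (if i = j then 1 else 0)"
  unfolding orthonormal_basis_def by blast

lemma ob_coeff:
  assumes "orthonormal_basis I v" "j \<in> I"
  shows "cinner (v j) (\<chi> k. \<Sum>i\<in>I. c i * v i $ k) = c j"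
proof -
  have fin: "finite I" using assms unfolding orthonormal_basis_def by blast
  have "cinner (v j) (\<chi> k. \<Sum>i\<in>I. c i * v i $ k) = (\<Sum>i\<in>I. c i * cinner (v j) (v i))"
    by (rule cinner_sum_right)
  also have "\<dots> = (\<Sum>i\<in>I. if j = i then c i else 0)"
    by (rule sum.cong) (use ob_orth[OF assms(1) assms(2)] in auto)
  also have "\<dots> = c j" using fin assms(2) by simp
  finally show ?thesis .
qed

lemma ob_expand:
  assumes "orthonormal_basis I v"
  shows "x = (\<chi> k. \<Sum>i\<in>I. cinner (v i) x * v i $ k)"
proof -
  obtain c where c: "x = (\<chi> k. \<Sum>i\<in>I. c i * v i $ k)" using assms unfolding orthonormal_basis_def by blast
  have "\<And>i. i \<in> I \<Longrightarrow> cinner (v i) x = c i" using ob_coeff[OF assms] c by simp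
  then have "(\<chi> k. \<Sum>i\<in>I. cinner (v i) x * v i $ k) = (\<chi> k. \<Sum>i\<in>I. c i * v i $ k)"
    by simp
  then show ?thesis using c by simp
qed

lemma parseval:
  assumes "orthonormal_basis I v"
  shows "cinner x x = of_real (\<Sum>i\<in>I. (cmod (cinner (v i) x))^2)"
proof -
  have "cinner x x = cinner x (\<chi> k. \<Sum>i\<in>I. cinner (v i) x * v i $ k)"
    using ob_expand[OF assms, of x] by simp
  also have "\<dots> = (\<Sum>i\<in>I. cinner (v i) x * cinner x (v i))" by (rule cinner_sum_right)
  also have "\<dots> = (\<Sum>i\<in>I. of_real ((cmod (cinner (v i) x))^2))"
    by (intro sum.cong refl) (rule cinner_self_cmod)
  finally show ?thesis by simp
qed

lemma parseval_unit:
  assumes "orthonormal_basis I v" "cinner x x = 1"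
  shows "(\<Sum>i\<in>I. (cmod (cinner (v i) x))^2) = 1"
  using parseval[OF assms(1), of x] assms(2) by (metis of_real_eq_1_iff)

lemma cinner_axis: "cinner (axis a (1::complex)) (axis b 1) = (if a = b then 1 else 0)"
proof -
  have "(\<Sum>k\<in>UNIV. cnj (axis a (1::complex) $ k) * axis b 1 $ k) = (\<Sum>k\<in>UNIV. if k = a then (if a = b then 1 else 0) else 0)"
    by (rule sum.cong) (auto simp: axis_def)
  then show ?thesis unfolding cinner_def by simp
qed

lemma axis_ob:
  fixes f :: "'i \<Rightarrow> 'm::finite"
  assumes "finite (UNIV::'i set)" "bij f"
  shows "orthonormal_basis UNIV (\<lambda>i. axis (f i) (1::complex))"
  unfolding orthonormal_basis_def
proof (intro conjI ballI allI)
  show "finite (UNIV::'i set)" by fact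
  fix i j
  show "cinner (axis (f i) 1) (axis (f j) 1) = (if i = j then 1 else 0)"
    using bij_is_inj[OF assms(2)] by (simp add: cinner_axis inj_eq)
next
  fix x :: "complex^'m"
  have "\<And>k. (\<Sum>i\<in>UNIV. x $ f i * axis (f i) 1 $ k) = x $ k"
  proof -
    fix k
    obtain i0 where i0: "f i0 = k" using bij_is_surj[OF assms(2)] by (metis surjD)
    have "(\<Sum>i\<in>UNIV. x $ f i * axis (f i) 1 $ k) = (\<Sum>i\<in>UNIV. if i = i0 then x $ k else 0)"
      using bij_is_inj[OF assms(2)] i0 by (intro sum.cong) (auto simp: axis_def inj_eq)
    also have "\<dots> = x $ k" using assms(1) by simp
    finally show "(\<Sum>i\<in>UNIV. x $ f i * axis (f i) 1 $ k) = x $ k" .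
  qed
  then show "\<exists>c. x = (\<chi> k. \<Sum>i\<in>UNIV. c i * axis (f i) 1 $ k)"
    by (intro exI[of _ "\<lambda>i. x $ f i"]) (simp add: vec_eq_iff)
qed

lemma tensor_axis: "tensor (axis a (1::complex)) (axis b 1) = axis (a,b) 1"
  unfolding tensor_def axis_def by (simp add: vec_eq_iff)

lemma MOQLS_row: "MOQLS t M \<Longrightarrow> k < t \<Longrightarrow> orthonormal_basis UNIV (\<lambda>j. M k i j)"
  unfolding MOQLS_def QLS_def by blast
lemma MOQLS_col: "MOQLS t M \<Longrightarrow> k < t \<Longrightarrow> orthonormal_basis UNIV (\<lambda>i. M k i j)"
  unfolding MOQLS_def QLS_def by blast
lemma MOQLS_unit: "MOQLS t M \<Longrightarrow> k < t \<Longrightarrow> cinner (M k i j) (M k i j) = 1"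
  using ob_orth[OF MOQLS_row] by fastforce
lemma MOQLS_row_orth: "MOQLS t M \<Longrightarrow> k < t \<Longrightarrow> j \<noteq> j' \<Longrightarrow> cinner (M k i j) (M k i j') = 0"
  using ob_orth[OF MOQLS_row] by fastforce
lemma MOQLS_col_orth: "MOQLS t M \<Longrightarrow> k < t \<Longrightarrow> i \<noteq> i' \<Longrightarrow> cinner (M k i j) (M k i' j) = 0"
  using ob_orth[OF MOQLS_col] by fastforce
lemma MOQLS_orth:
  assumes "MOQLS t M" "k < t" "l < t" "k \<noteq> l" "(i,j) \<noteq> (i',j')"
  shows "cinner (M k i j) (M k i' j') * cinner (M l i j) (M l i' j') = 0"
proof -
  have "orthogonal_QLS (M k) (M l)" using assms unfolding MOQLS_def by blast
  then have "orthonormal_basis UNIV (\<lambda>(i,j). tensor (M k i j) (M l i j))"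
    unfolding orthogonal_QLS_def .
  from ob_orth[OF this, of "(i,j)" "(i',j')"] assms(5) show ?thesis
    by (simp add: cinner_tensor)
qed

lemma cmod_cinner_swap: "cmod (cinner x y) = cmod (cinner y x)"
  by (metis cinner_commute complex_mod_cnj)

lemma counting:
  fixes M :: "nat \<Rightarrow> 'n::finite \<Rightarrow> 'n \<Rightarrow> complex^'n"
  assumes n2: "CARD('n) \<ge> 2" and MO: "MOQLS t M"
  shows "t \<le> CARD('n) - 1 \<and> (t = CARD('n) - 1 \<longrightarrow>
     (\<forall>k<t. \<forall>i j. cmod (cinner (M k i1 j1) (M k i j)) = 0 \<or> cmod (cinner (M k i1 j1) (M k i j)) = 1))"
proof -
  define n where "n = CARD('n)"
  define g where "g k y = (cmod (cinner (M k i1 j1) (M k (fst y) (snd y))))^2" for k y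
  define D where "D = (UNIV - {i1}) \<times> (UNIV - {j1})"
  have finD: "finite D" unfolding D_def by simp
  have cardC: "card (UNIV - {a::'n}) = n - 1" for a
    unfolding n_def by (simp add: card_Diff_singleton)
  have cardD: "card D = (n - 1) * (n - 1)" unfolding D_def by (simp add: card_cartesian_product cardC)
  have g_nonneg: "g k y \<ge> 0" for k y unfolding g_def by simp
  have rowsum: "(\<Sum>j\<in>UNIV - {j1}. g k (i,j)) = 1" if "k < t" "i \<noteq> i1" for k i
  proof -
    have "(\<Sum>j\<in>UNIV. (cmod (cinner (M k i j) (M k i1 j1)))^2) = 1"
      by (rule parseval_unit[OF MOQLS_row[OF MO that(1)] MOQLS_unit[OF MO that(1)]])
    then have "(\<Sum>j\<in>UNIV. g k (i,j)) = 1" unfolding g_def by (simp add: cmod_cinner_swap)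
    moreover have "g k (i,j1) = 0" unfolding g_def using MOQLS_col_orth[OF MO that(1)] that(2) by simp
    moreover have "(\<Sum>j\<in>UNIV. g k (i,j)) = g k (i,j1) + (\<Sum>j\<in>UNIV - {j1}. g k (i,j))"
      by (simp add: sum.remove)
    ultimately show ?thesis by simp
  qed
  have A: "(\<Sum>y\<in>D. g k y) = real n - 1" if "k < t" for k
  proof -
    have "(\<Sum>y\<in>D. g k y) = (\<Sum>i\<in>UNIV - {i1}. \<Sum>j\<in>UNIV - {j1}. g k (i,j))"
      unfolding D_def by (simp add: sum.cartesian_product)
    also have "\<dots> = (\<Sum>i\<in>UNIV - {i1}. 1)" using rowsum[OF that] by simp
    also have "\<dots> = real (n - 1)" using cardC by simp
    also have "\<dots> = real n - 1" using n2 unfolding n_def by simp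
    finally show ?thesis .
  qed
  have B: "g k y * g l y = 0" if "y \<in> D" "k < t" "l < t" "k \<noteq> l" for k l y
  proof -
    obtain i j where y: "y = (i,j)" by fastforce
    have "(i,j) \<noteq> (i1,j1)" using that(1) y unfolding D_def by auto
    then have "cinner (M k i1 j1) (M k i j) * cinner (M l i1 j1) (M l i j) = 0"
      using MOQLS_orth[OF MO that(2,3,4)] by metis
    then show ?thesis unfolding g_def y by (auto simp: power2_eq_square)
  qed
  have C: "g k y \<le> 1" if "k < t" for k y
  proof -
    obtain i j where y: "y = (i,j)" by fastforce
    have "(\<Sum>j\<in>UNIV. (cmod (cinner (M k i j) (M k i1 j1)))^2) = 1"
      by (rule parseval_unit[OF MOQLS_row[OF MO that(1)] MOQLS_unit[OF MO that(1)]])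
    moreover have "(cmod (cinner (M k i j) (M k i1 j1)))^2 \<le> (\<Sum>j\<in>UNIV. (cmod (cinner (M k i j) (M k i1 j1)))^2)"
      by (rule member_le_sum) auto
    ultimately show ?thesis unfolding g_def y by (simp add: cmod_cinner_swap)
  qed
  have S1: "(\<Sum>l<t. g l y) = g k y" if "y \<in> D" "k < t" "g k y \<noteq> 0" for k y
  proof -
    have "(\<Sum>l<t. g l y) = g k y + (\<Sum>l\<in>{..<t} - {k}. g l y)"
      using that(2) by (simp add: sum.remove)
    also have "(\<Sum>l\<in>{..<t} - {k}. g l y) = 0"
      using B[OF that(1) that(2)] that(3) by (intro sum.neutral) auto
    finally show ?thesis by simp
  qed
  have S: "(\<Sum>l<t. g l y) \<le> 1" if "y \<in> D" for y
  proof (cases "\<exists>k<t. g k y \<noteq> 0")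
    case True
    then obtain k where "k < t" "g k y \<noteq> 0" by blast
    then show ?thesis using S1[OF that] C by simp
  next
    case False
    then show ?thesis by simp
  qed
  have tot: "(\<Sum>y\<in>D. \<Sum>l<t. g l y) = real t * (real n - 1)"
    by (subst sum.swap) (simp add: A)
  have le: "(\<Sum>y\<in>D. \<Sum>l<t. g l y) \<le> (\<Sum>y\<in>D. 1)" by (rule sum_mono) (rule S)
  have cardDr: "(\<Sum>y\<in>D. (1::real)) = (real n - 1) * (real n - 1)"
    using cardD n2 unfolding n_def by (simp add: of_nat_diff)
  have npos: "real n - 1 > 0" using n2 unfolding n_def by simp
  have "real t * (real n - 1) \<le> (real n - 1) * (real n - 1)" using tot le cardDr by simp
  then have "real t \<le> real n - 1" using npos by simp
  then have tle: "t \<le> n - 1" using n2 unfolding n_def by linarith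
  moreover have "\<forall>k<t. \<forall>i j. cmod (cinner (M k i1 j1) (M k i j)) = 0 \<or> cmod (cinner (M k i1 j1) (M k i j)) = 1"
    if teq: "t = n - 1"
  proof (intro allI impI)
    fix k i j assume kt: "k < t"
    have "(\<Sum>y\<in>D. 1 - (\<Sum>l<t. g l y)) = (\<Sum>y\<in>D. 1) - (\<Sum>y\<in>D. \<Sum>l<t. g l y)"
      by (simp add: sum_subtractf)
    also have "\<dots> = 0" using tot cardDr teq n2 unfolding n_def by (simp add: of_nat_diff)
    finally have "(\<Sum>y\<in>D. 1 - (\<Sum>l<t. g l y)) = 0" .
    then have Sy: "\<forall>y\<in>D. 1 - (\<Sum>l<t. g l y) = 0"
      using sum_nonneg_eq_0_iff[OF finD, of "\<lambda>y. 1 - (\<Sum>l<t. g l y)"] S by simp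
    show "cmod (cinner (M k i1 j1) (M k i j)) = 0 \<or> cmod (cinner (M k i1 j1) (M k i j)) = 1"
    proof (cases "(i,j) \<in> D")
      case True
      have "g k (i,j) = 0 \<or> g k (i,j) = 1"
        using S1[OF True kt] Sy True by force
      moreover have "cmod (cinner (M k i1 j1) (M k i j)) \<ge> 0" by simp
      ultimately show ?thesis unfolding g_def by (smt (verit) power2_eq_1_iff zero_eq_power2 fst_conv snd_conv)
    next
      case False
      then have "i = i1 \<or> j = j1" unfolding D_def by auto
      then show ?thesis
        using MOQLS_unit[OF MO kt] MOQLS_row_orth[OF MO kt] MOQLS_col_orth[OF MO kt]
        by (cases "i = i1"; cases "j = j1") auto
    qed
  qed
  ultimately show ?thesis unfolding n_def by blast
qed

lemma cinner_scale_right: "cinner x (b *s y) = b * cinner x y"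
  unfolding cinner_def by (simp add: sum_distrib_left algebra_simps)

lemma entry_structure:
  fixes M :: "nat \<Rightarrow> 'n::finite \<Rightarrow> 'n \<Rightarrow> complex^'n"
  assumes n2: "CARD('n) \<ge> 2" and MO: "MOQLS t M" and teq: "t = CARD('n) - 1" and kt: "k < t"
  shows "\<exists>a c. cmod c = 1 \<and> M k i j = c *s M k i0 a"
proof -
  define e where "e a = M k i0 a" for a
  define \<psi> where "\<psi> = M k i j"
  define c where "c a = cinner (e a) \<psi>" for a
  have ob: "orthonormal_basis UNIV e" unfolding e_def by (rule MOQLS_row[OF MO kt])
  have P: "(\<Sum>a\<in>UNIV. (cmod (c a))^2) = 1"
    unfolding c_def \<psi>_def by (rule parseval_unit[OF ob MOQLS_unit[OF MO kt]])
  have Z: "cmod (c a) = 0 \<or> cmod (c a) = 1" for a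
    using counting[OF n2 MO, of i0 a] teq kt unfolding c_def e_def \<psi>_def by blast
  obtain a0 where a0: "cmod (c a0) \<noteq> 0"
  proof (rule ccontr)
    assume "\<not> thesis"
    then have "\<forall>a. cmod (c a) = 0" using that by blast
    then show False using P by simp
  qed
  then have a01: "cmod (c a0) = 1" using Z by blast
  have "(\<Sum>a\<in>UNIV. (cmod (c a))^2) = (cmod (c a0))^2 + (\<Sum>a\<in>UNIV - {a0}. (cmod (c a))^2)"
    by (simp add: sum.remove)
  then have "(\<Sum>a\<in>UNIV - {a0}. (cmod (c a))^2) = 0" using P a01 by simp
  then have "\<forall>a\<in>UNIV - {a0}. (cmod (c a))^2 = 0"
    by (subst (asm) sum_nonneg_eq_0_iff) auto
  then have c0: "c a = 0" if "a \<noteq> a0" for a using that by auto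
  have "\<psi> = (\<chi> m. \<Sum>a\<in>UNIV. c a * e a $ m)" unfolding c_def by (rule ob_expand[OF ob])
  also have "\<dots> = (\<chi> m. c a0 * e a0 $ m)"
  proof -
    have "\<And>m. (\<Sum>a\<in>UNIV. c a * e a $ m) = c a0 * e a0 $ m"
    proof -
      fix m
      have "(\<Sum>a\<in>UNIV. c a * e a $ m) = c a0 * e a0 $ m + (\<Sum>a\<in>UNIV - {a0}. c a * e a $ m)"
        by (simp add: sum.remove)
      also have "(\<Sum>a\<in>UNIV - {a0}. c a * e a $ m) = 0" using c0 by (intro sum.neutral) auto
      finally show "(\<Sum>a\<in>UNIV. c a * e a $ m) = c a0 * e a0 $ m" by simp
    qed
    then show ?thesis by simp
  qed
  also have "\<dots> = c a0 *s e a0" by (simp add: vec_eq_iff)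
  finally show ?thesis using a01 unfolding \<psi>_def e_def by blast
qed

lemma inj_bij_finite: "inj (f :: 'a::finite \<Rightarrow> 'a) \<Longrightarrow> bij f"
  by (simp add: bij_def finite_UNIV_inj_surj)

theorem mainTheorem2:
  fixes M :: "nat \<Rightarrow> 'n::finite \<Rightarrow> 'n \<Rightarrow> complex^'n" and t :: nat
  assumes "CARD('n) \<ge> 2"
    and "MOQLS t M"
  shows "t \<le> CARD('n) - 1 \<and> (t = CARD('n) - 1 \<longrightarrow> classical_MOQLS t M)"
proof -
  note n2 = assms(1) and MO = assms(2)
  have tle: "t \<le> CARD('n) - 1" using counting[OF n2 MO] by blast
  moreover have "classical_MOQLS t M" if teq: "t = CARD('n) - 1"
  proof -
    define i0 :: 'n where "i0 = undefined"
    define e where "e k a = M k i0 a" for k a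
    define F where "F k i j = (SOME p. cmod (snd p) = 1 \<and> M k i j = snd p *s M k i0 (fst p))" for k i j
    define L where "L k i j = fst (F k i j)" for k i j
    define ph where "ph k i j = snd (F k i j)" for k i j
    have Mrep: "cmod (ph k i j) = 1 \<and> M k i j = ph k i j *s e k (L k i j)" if "k < t" for k i j
    proof -
      from entry_structure[OF n2 MO teq that, of i j i0]
      have "\<exists>p. cmod (snd p) = 1 \<and> M k i j = snd p *s M k i0 (fst p)" by auto
      from someI_ex[OF this] show ?thesis unfolding ph_def L_def e_def F_def .
    qed
    have obe: "orthonormal_basis UNIV (e k)" if "k < t" for k
      unfolding e_def by (rule MOQLS_row[OF MO that])
    have cin: "cinner (M k i j) (M k i' j') \<noteq> 0" if "k < t" "L k i j = L k i' j'" for k i j i' j'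
    proof -
      have "cinner (M k i j) (M k i' j') = cnj (ph k i j) * ph k i' j' * cinner (e k (L k i j)) (e k (L k i' j'))"
        using Mrep[OF that(1)] by (metis cinner_scale)
      also have "\<dots> = cnj (ph k i j) * ph k i' j'"
        using ob_orth[OF obe[OF that(1)]] that(2) by simp
      finally show ?thesis using Mrep[OF that(1), of i j] Mrep[OF that(1), of i' j'] by auto
    qed
    have injrow: "inj (L k i)" if "k < t" for k i
      using cin[OF that] MOQLS_row_orth[OF MO that] by (metis injI)
    have injcol: "inj (\<lambda>i. L k i j)" if "k < t" for k j
      using cin[OF that] MOQLS_col_orth[OF MO that] by (metis injI)
    have injpair: "inj (\<lambda>(i,j). (L k i j, L l i j))" if "k < t" "l < t" "k \<noteq> l" for k l
    proof (rule injI)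
      fix x y assume "(case x of (i,j) \<Rightarrow> (L k i j, L l i j)) = (case y of (i,j) \<Rightarrow> (L k i j, L l i j))"
      moreover obtain i j i' j' where "x = (i,j)" "y = (i',j')" by fastforce
      ultimately have eq: "L k i j = L k i' j'" "L l i j = L l i' j'" "x = (i,j)" "y = (i',j')" by auto
      show "x = y"
      proof (rule ccontr)
        assume "x \<noteq> y"
        then have "cinner (M k i j) (M k i' j') * cinner (M l i j) (M l i' j') = 0"
          using MOQLS_orth[OF MO that] eq by auto
        then show False using cin[OF that(1) eq(1)] cin[OF that(2) eq(2)] by simp
      qed
    qed
    define N where "N k i j = axis (L k i j) (1::complex)" for k i j
    have QN: "QLS (N k)" if "k < t" for k
      unfolding QLS_def N_def
      using axis_ob[OF _ inj_bij_finite[OF injrow[OF that]]]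
        axis_ob[OF _ inj_bij_finite[OF injcol[OF that]]] by auto
    have ON: "orthogonal_QLS (N k) (N l)" if "k < t" "l < t" "k \<noteq> l" for k l
    proof -
      have "(\<lambda>(i,j). tensor (N k i j) (N l i j)) = (\<lambda>x. axis ((\<lambda>(i,j). (L k i j, L l i j)) x) (1::complex))"
        by (auto simp: fun_eq_iff N_def tensor_axis)
      then show ?thesis unfolding orthogonal_QLS_def
        using axis_ob[OF _ inj_bij_finite[OF injpair[OF that]]] by simp
    qed
    have MN: "MOQLS t N" unfolding MOQLS_def using QN ON by blast
    define U where "U k = (\<chi> a m. cnj (e k a $ m))" for k
    have Uv: "(U k *v v) $ a = cinner (e k a) v" for k v a
      unfolding U_def cinner_def by (simp add: matrix_vector_mult_def)
    have Uunit: "cunitary (U k)" if "k < t" for k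
    proof -
      have "U k ** cadj (U k) = mat 1"
        using ob_orth[OF obe[OF that]]
        by (simp add: vec_eq_iff matrix_matrix_mult_def cadj_def U_def mat_def cinner_def)
      then show ?thesis unfolding cunitary_def using matrix_left_right_inverse by blast
    qed
    define M1 where "M1 k i j = U k *v M k i j" for k i j
    have M1rep: "M1 k i j = ph k i j *s axis (L k i j) 1" if "k < t" for k i j
    proof -
      have "(U k *v M k i j) $ a = (ph k i j *s axis (L k i j) 1) $ a" for a
        using Mrep[OF that, of i j] ob_orth[OF obe[OF that], of a "L k i j"]
        by (simp add: Uv cinner_scale_right axis_def)
      then show ?thesis unfolding M1_def by (simp add: vec_eq_iff)
    qed
    have s1: "iso_step t M M1" unfolding iso_step_def M1_def using Uunit by blast
    have s2: "iso_step t M1 N"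
    proof -
      have "N k i j = cnj (ph k i j) *s M1 k i j" if "k < t" for k i j
      proof -
        have "cnj (ph k i j) * ph k i j = 1"
          using Mrep[OF that, of i j] by (metis complex_norm_square mult.commute of_real_1 power_one)
        then show ?thesis using M1rep[OF that] unfolding N_def by (simp add: vector_smult_assoc)
      qed
      moreover have "norm (cnj (ph k i j)) = 1" if "k < t" for k i j using Mrep[OF that] by simp
      ultimately show ?thesis unfolding iso_step_def
        by (intro disjI1 exI[of _ "\<lambda>k i j. cnj (ph k i j)"]) auto
    qed
    have "isotopic t M N" unfolding isotopic_def
      using s1 s2 by (meson rtranclp.rtrancl_into_rtrancl r_into_rtranclp)
    then show ?thesis unfolding classical_MOQLS_def using MN N_def by blast
  qed
  ultimately show ?thesis by blast
qed

end
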